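(* Let $p\in(0,1)$, $t\ge0$, and let $x,\tilde x\in\mathcal{U}_0$ with $\tilde x\preccurlyeq x$. Then $\mathbb{P}_p^{x}(X_t=O)\le\mathbb{P}_p^{\tilde x}(X_t=O)$.
   Context: The simple exclusion process on $\mathbb{Z}$ with parameter $p\in(0,1)$: each site is occupied by at most one particle; each particle attempts to jump one site to the right at rate $p$ and one site to the left at rate $1-p$, an attempt succeeding iff the target site is empty. $O$ is the configuration with every negative site occupied and every non-negative site empty; $\mathcal{U}_0$ is the set of configurations in which the number of particles in $[0,\infty)$ is finite and equal to the number of holes in $(-\infty,0)$. $\mathbb{P}_p^x$ is the law of the process started from $x$ and $X_t$ the state at time $t$. For $x,\tilde x\in\mathcal{U}_0$, $\tilde x\preccurlyeq x$ means that for every site $i$, the number of particles to the right of $i$ in $x$ is at least the number in $\tilde x$ (equivalently, for each $k$ the $k$-th rightmost particle of $\tilde x$ is no further right than the $k$-th rightmost particle of $x$). *)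

theory Defs
  imports "HOL-Analysis.Analysis"
begin

(* A configuration is the set of occupied sites of Z. *)
type_synonym config = "int set"

definition U0 :: "config set" where
  "U0 = {x. finite {i \<in> x. i \<ge> 0} \<and> finite {i. i < 0 \<and> i \<notin> x} \<and>
            card {i \<in> x. i \<ge> 0} = card {i. i < 0 \<and> i \<notin> x}}"

definition Oconf :: config where
  "Oconf = {i. i < 0}"

definition sep_preceq :: "config \<Rightarrow> config \<Rightarrow> bool" where
  "sep_preceq xt x \<longleftrightarrow> (\<forall>i::int. card {j \<in> xt. j > i} \<le> card {j \<in> x. j > i})"

definition sep_move :: "config \<Rightarrow> int \<Rightarrow> int \<Rightarrow> config" where
  "sep_move x i j = insert j (x - {i})"

definition sep_R :: "config \<Rightarrow> int set" where
  "sep_R x = {i. i \<in> x \<and> i + 1 \<notin> x}"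

definition sep_L :: "config \<Rightarrow> int set" where
  "sep_L x = {i. i \<in> x \<and> i - 1 \<notin> x}"

definition sep_rate :: "real \<Rightarrow> config \<Rightarrow> real" where
  "sep_rate p x = p * real (card (sep_R x)) + (1 - p) * real (card (sep_L x))"

(* sep_f p n t x y: probability, starting from x, of having made exactly n jumps by time t
   and being at y (backward integral recursion for continuous-time Markov chains). *)
primrec sep_f :: "real \<Rightarrow> nat \<Rightarrow> real \<Rightarrow> config \<Rightarrow> config \<Rightarrow> real" where
  "sep_f p 0 t x y = (if x = y then exp (- sep_rate p x * t) else 0)"
| "sep_f p (Suc n) t x y =
     integral {0..t} (\<lambda>s. exp (- sep_rate p x * s) *
        ((\<Sum>i\<in>sep_R x. p * sep_f p n (t - s) (sep_move x i (i + 1)) y) +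
         (\<Sum>i\<in>sep_L x. (1 - p) * sep_f p n (t - s) (sep_move x i (i - 1)) y)))"

definition sep_prob :: "real \<Rightarrow> config \<Rightarrow> real \<Rightarrow> config \<Rightarrow> real" where
  "sep_prob p x t y = (\<Sum>n. sep_f p n t x y)"

end

theory Submission
  imports Defs
begin



definition Gs :: "real \<Rightarrow> (config \<Rightarrow> real) \<Rightarrow> config \<Rightarrow> real" where
 "Gs p \<phi> x = (\<Sum>i\<in>sep_R x. p * \<phi> (sep_move x i (i+1))) + (\<Sum>i\<in>sep_L x. (1-p) * \<phi> (sep_move x i (i-1)))"

lemma sep_f_Suc': "sep_f p (Suc n) t x y = integral {0..t} (\<lambda>s. exp (- sep_rate p x * s) * Gs p (\<lambda>w. sep_f p n (t-s) w y) x)"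
  by (simp add: Gs_def)

lemma subst_int: "integral {0..t} (\<lambda>s. h (t - s)) = integral {0..t} (h::real\<Rightarrow>real)"
proof -
  have "integral {0..t} (\<lambda>s. h (t - s)) = integral {-t..-0} (\<lambda>x. h (t - - x))"
    using Henstock_Kurzweil_Integration.integral_reflect_real[of t 0 "\<lambda>s. h (t-s)"] by simp
  also have "\<dots> = integral {-t..0} (h \<circ> (+) t)" by (simp add: o_def)
  also have "\<dots> = integral {0..t} h" using integral_shift_Icc_real[of "-t" 0 h t] by simp
  finally show ?thesis .
qed

lemma conv_form: fixes c t :: real and g :: "real \<Rightarrow> real" shows "integral {0..t} (\<lambda>s. exp (- c * s) * g (t - s)) = exp (- c * t) * integral {0..t} (\<lambda>\<sigma>. exp (c*\<sigma>) * g \<sigma>)"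
proof -
  have "integral {0..t} (\<lambda>s. exp (- c * s) * g (t - s)) = integral {0..t} (\<lambda>s. exp (- c * (t - (t-s))) * g (t - s))" by simp
  also have "\<dots> = integral {0..t} (\<lambda>\<sigma>. exp (- c * (t - \<sigma>)) * g \<sigma>)"
    using subst_int[of t "\<lambda>\<sigma>. exp (- c * (t - \<sigma>)) * g \<sigma>"] by simp
  also have "\<dots> = integral {0..t} (\<lambda>\<sigma>. exp (- c * t) * (exp (c*\<sigma>) * g \<sigma>))"
    by (simp add: algebra_simps flip: exp_add)
  also have "\<dots> = exp (- c * t) * integral {0..t} (\<lambda>\<sigma>. exp (c*\<sigma>) * g \<sigma>)" by simp
  finally show ?thesis .
qed

lemma lemA:
  fixes g :: "real \<Rightarrow> real" and t T a c :: real
  assumes g: "\<And>T. continuous_on {0..T} g"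
  defines "\<phi> \<equiv> \<lambda>t. exp (- c * t) * (a + integral {0..t} (\<lambda>\<sigma>. exp (c*\<sigma>) * g \<sigma>))"
  shows "continuous_on {0..T} \<phi>" and "0 < t \<Longrightarrow> (\<phi> has_real_derivative (- c * \<phi> t + g t)) (at t)"
proof -
  have ce: "continuous_on {0..T} (\<lambda>\<sigma>. exp (c*\<sigma>) * g \<sigma>)" for T
    by (intro continuous_intros g)
  show "continuous_on {0..T} \<phi>" unfolding \<phi>_def
    by (intro continuous_intros indefinite_integral_continuous_1 integrable_continuous_real ce)
  assume t: "0 < t"
  have d1: "((\<lambda>x. integral {0..x} (\<lambda>\<sigma>. exp (c*\<sigma>) * g \<sigma>)) has_real_derivative exp (c*t) * g t) (at t within {0..t+1})"
    using integral_has_real_derivative[OF ce[of "t+1"], of t] t by simp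
  have "at t within {0..t+1} = at t"
    by (rule at_within_interior) (use t in simp)
  then have d2: "((\<lambda>x. integral {0..x} (\<lambda>\<sigma>. exp (c*\<sigma>) * g \<sigma>)) has_real_derivative exp (c*t) * g t) (at t)"
    using d1 by simp
  have d3: "((\<lambda>x. a + integral {0..x} (\<lambda>\<sigma>. exp (c*\<sigma>) * g \<sigma>)) has_real_derivative exp (c*t) * g t) (at t)"
    using DERIV_add[OF DERIV_const d2] by simp
  have e: "((\<lambda>x. exp (-c*x)) has_real_derivative exp (- c * t) * (- c)) (at t)"
    by (auto intro!: derivative_eq_intros)
  have "(\<phi> has_real_derivative (exp (- c * t) * (- c) * (a + integral {0..t} (\<lambda>\<sigma>. exp (c*\<sigma>) * g \<sigma>)) + exp (- c * t) * (exp (c*t) * g t))) (at t)"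
    unfolding \<phi>_def using DERIV_mult[OF e d3] by (simp add: algebra_simps)
  moreover have "exp (- c * t) * (- c) * (a + integral {0..t} (\<lambda>\<sigma>. exp (c*\<sigma>) * g \<sigma>)) + exp (- c * t) * (exp (c*t) * g t) = - c * \<phi> t + g t"
    unfolding \<phi>_def by (simp add: algebra_simps flip: exp_add)
  ultimately show "(\<phi> has_real_derivative (- c * \<phi> t + g t)) (at t)" by simp
qed

lemma Gs_cont: assumes "\<And>w. continuous_on S (\<lambda>t. \<phi> t w)" shows "continuous_on S (\<lambda>t. Gs p (\<phi> t) x)"
  unfolding Gs_def by (intro continuous_intros assms)

context fixes p :: real assumes p0: "0 < p" and p1: "p < 1" begin

lemma Gs_mono: "(\<And>w. \<phi> w \<le> \<psi> w) \<Longrightarrow> Gs p \<phi> x \<le> Gs p \<psi> x"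
  unfolding Gs_def using p0 p1 by (intro add_mono sum_mono mult_left_mono) auto

lemma Gs_nonneg: "(\<And>w. 0 \<le> \<phi> w) \<Longrightarrow> 0 \<le> Gs p \<phi> x"
  unfolding Gs_def using p0 p1 by (intro add_nonneg_nonneg sum_nonneg mult_nonneg_nonneg) auto

lemma Gs_le_rate: "(\<And>w. \<phi> w \<le> 1) \<Longrightarrow> Gs p \<phi> x \<le> sep_rate p x"
proof -
  assume h: "\<And>w. \<phi> w \<le> 1"
  have "Gs p \<phi> x \<le> Gs p (\<lambda>w. 1) x" by (rule Gs_mono) (use h in auto)
  also have "\<dots> = sep_rate p x" unfolding Gs_def sep_rate_def by simp
  finally show ?thesis .
qed

end

lemma Gs_add: "Gs p (\<lambda>w. \<phi> w + \<psi> w) x = Gs p \<phi> x + Gs p \<psi> x"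
  unfolding Gs_def by (simp add: distrib_left sum.distrib)

lemma Gs_zero[simp]: "Gs p (\<lambda>w. 0) x = 0"
  unfolding Gs_def by simp

lemma f_rep: "sep_f p (Suc n) t x y = exp (- sep_rate p x * t) * integral {0..t} (\<lambda>\<sigma>. exp (sep_rate p x * \<sigma>) * Gs p (\<lambda>w. sep_f p n \<sigma> w y) x)"
  unfolding sep_f_Suc' by (rule conv_form)

lemma f_props: "(\<forall>T. continuous_on {0..T} (\<lambda>t. sep_f p n t x y)) \<and> (0 < p \<longrightarrow> p < 1 \<longrightarrow> (\<forall>t\<ge>0. 0 \<le> sep_f p n t x y))"
proof (induction n arbitrary: x y)
  case 0
  then show ?case by (cases "x = y") (auto intro!: continuous_intros)
next
  case (Suc n)
  let ?g = "\<lambda>\<sigma>. Gs p (\<lambda>w. sep_f p n \<sigma> w y) x"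
  have gc: "continuous_on {0..T} ?g" for T
    by (rule Gs_cont) (use Suc in auto)
  have "continuous_on {0..T} (\<lambda>t. sep_f p (Suc n) t x y)" for T
    using lemA(1)[OF gc, where c="sep_rate p x" and a=0 and T=T] unfolding f_rep by simp
  moreover have "0 \<le> sep_f p (Suc n) t x y" if "0 < p" "p < 1" "t \<ge> 0" for t
    unfolding f_rep
    by (intro mult_nonneg_nonneg integral_nonneg integrable_continuous_real continuous_intros gc)
       (use Suc that in \<open>auto intro!: Gs_nonneg\<close>)
  ultimately show ?case by blast
qed

definition F :: "real \<Rightarrow> nat \<Rightarrow> real \<Rightarrow> config \<Rightarrow> real" where
  "F p N t x = (\<Sum>n<N. sep_f p n t x Oconf)"

lemma F_cont: "continuous_on {0..T} (\<lambda>t. F p N t x)"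
  unfolding F_def using f_props by (intro continuous_intros) auto

lemma F_rep: "F p (Suc N) t x = exp (- sep_rate p x * t) * ((if x = Oconf then 1 else 0) +
   integral {0..t} (\<lambda>\<sigma>. exp (sep_rate p x * \<sigma>) * Gs p (\<lambda>w. F p N \<sigma> w) x))"
proof (induction N arbitrary: t x)
  case 0
  then show ?case by (simp add: F_def)
next
  case (Suc N)
  have i1: "(\<lambda>\<sigma>. exp (sep_rate p x * \<sigma>) * Gs p (\<lambda>w. F p N \<sigma> w) x) integrable_on {0..t}"
    by (intro integrable_continuous_real continuous_intros Gs_cont F_cont)
  have i2: "(\<lambda>\<sigma>. exp (sep_rate p x * \<sigma>) * Gs p (\<lambda>w. sep_f p N \<sigma> w Oconf) x) integrable_on {0..t}"
    by (intro integrable_continuous_real continuous_intros Gs_cont) (use f_props in auto)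
  have FS: "F p (Suc M) \<sigma> w = F p M \<sigma> w + sep_f p M \<sigma> w Oconf" for M \<sigma> w
    by (simp add: F_def)
  have "integral {0..t} (\<lambda>\<sigma>. exp (sep_rate p x * \<sigma>) * Gs p (\<lambda>w. F p (Suc N) \<sigma> w) x)
     = integral {0..t} (\<lambda>\<sigma>. exp (sep_rate p x * \<sigma>) * Gs p (\<lambda>w. F p N \<sigma> w) x + exp (sep_rate p x * \<sigma>) * Gs p (\<lambda>w. sep_f p N \<sigma> w Oconf) x)"
    unfolding FS Gs_add by (simp add: algebra_simps)
  also have "\<dots> = integral {0..t} (\<lambda>\<sigma>. exp (sep_rate p x * \<sigma>) * Gs p (\<lambda>w. F p N \<sigma> w) x) + integral {0..t} (\<lambda>\<sigma>. exp (sep_rate p x * \<sigma>) * Gs p (\<lambda>w. sep_f p N \<sigma> w Oconf) x)"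
    by (rule integral_add[OF i1 i2])
  finally show ?case
    using Suc[of t x] unfolding FS[of "Suc N"] f_rep by (simp add: algebra_simps)
qed

lemma int_exp: fixes c t :: real assumes "0 \<le> t" shows "integral {0..t} (\<lambda>\<sigma>. exp (c * \<sigma>) * c) = exp (c * t) - 1"
proof -
  have "((\<lambda>\<sigma>. exp (c * \<sigma>) * c) has_integral (exp (c * t) - exp (c * 0))) {0..t}"
    by (rule fundamental_theorem_of_calculus[OF assms])
       (auto intro!: derivative_eq_intros simp: has_real_derivative_iff_has_vector_derivative[symmetric])
  then have "((\<lambda>\<sigma>. exp (c * \<sigma>) * c) has_integral (exp (c * t) - 1)) {0..t}" by simp
  then show ?thesis by (rule integral_unique)
qed

context fixes p :: real assumes p0: "0 < p" and p1: "p < 1" begin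

lemma f_nonneg: "0 \<le> t \<Longrightarrow> 0 \<le> sep_f p n t x y"
  using f_props p0 p1 by blast

lemma F_nonneg: "0 \<le> t \<Longrightarrow> 0 \<le> F p N t x"
  unfolding F_def by (intro sum_nonneg f_nonneg)

lemma F_mono: "0 \<le> t \<Longrightarrow> F p N t x \<le> F p (Suc N) t x"
  unfolding F_def using f_nonneg by simp

lemma rate_nonneg: "0 \<le> sep_rate p x"
  unfolding sep_rate_def using p0 p1 by simp

lemma F_le1: "0 \<le> t \<Longrightarrow> F p N t x \<le> 1"
proof (induction N arbitrary: t x)
  case 0
  then show ?case by (simp add: F_def)
next
  case (Suc N)
  let ?r = "sep_rate p x"
  have "integral {0..t} (\<lambda>\<sigma>. exp (?r * \<sigma>) * Gs p (\<lambda>w. F p N \<sigma> w) x) \<le> integral {0..t} (\<lambda>\<sigma>. exp (?r * \<sigma>) * ?r)"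
    by (intro integral_le integrable_continuous_real continuous_intros Gs_cont F_cont mult_left_mono Gs_le_rate[OF p0 p1])
       (use Suc in auto)
  also have "\<dots> = exp (?r * t) - 1" by (rule int_exp) (use Suc in simp)
  finally have "F p (Suc N) t x \<le> exp (- ?r * t) * (1 + (exp (?r * t) - 1))"
    unfolding F_rep by (intro mult_left_mono add_mono) auto
  also have "\<dots> = 1" by (simp flip: exp_add)
  finally show ?case .
qed

end


definition U :: "real \<Rightarrow> real \<Rightarrow> config \<Rightarrow> real" where
  "U p t x = sep_prob p x t Oconf"

lemma F_deriv: "0 < t \<Longrightarrow> ((\<lambda>t. F p (Suc N) t x) has_real_derivative
   (- sep_rate p x * F p (Suc N) t x + Gs p (\<lambda>w. F p N t w) x)) (at t)"
  unfolding F_rep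
  by (rule lemA(2)[where g="\<lambda>\<sigma>. Gs p (\<lambda>w. F p N \<sigma> w) x"]) (auto intro: Gs_cont F_cont)

lemma F_at0: "F p (Suc N) 0 x = (if x = Oconf then 1 else 0)"
  unfolding F_rep by simp

context fixes p :: real assumes p0: "0 < p" and p1: "p < 1" begin

lemma U_summable: "0 \<le> t \<Longrightarrow> summable (\<lambda>n. sep_f p n t x Oconf)"
  by (rule summableI_nonneg_bounded[where x=1]) (use f_nonneg[OF p0 p1] F_le1[OF p0 p1] in \<open>auto simp: F_def\<close>)

lemma F_tendsto_U: "0 \<le> t \<Longrightarrow> (\<lambda>N. F p N t x) \<longlonglongrightarrow> U p t x"
  unfolding F_def U_def sep_prob_def by (rule summable_LIMSEQ[OF U_summable])

lemma F_le_U: "0 \<le> t \<Longrightarrow> F p N t x \<le> U p t x"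
  unfolding F_def U_def sep_prob_def
  by (rule sum_le_suminf[OF U_summable]) (use f_nonneg[OF p0 p1] in auto)

lemma U_nonneg: "0 \<le> t \<Longrightarrow> 0 \<le> U p t x"
  using F_le_U[of t 0 x] by (simp add: F_def)

lemma U_le1: "0 \<le> t \<Longrightarrow> U p t x \<le> 1"
  unfolding U_def sep_prob_def
  by (rule suminf_le_const[OF U_summable]) (use F_le1[OF p0 p1] in \<open>auto simp: F_def\<close>)

lemma U_rep:
  assumes t: "0 \<le> t"
  shows "(\<lambda>\<sigma>. exp (sep_rate p x * \<sigma>) * Gs p (\<lambda>w. U p \<sigma> w) x) integrable_on {0..t}"
    and "U p t x = exp (- sep_rate p x * t) * ((if x = Oconf then 1 else 0) +
          integral {0..t} (\<lambda>\<sigma>. exp (sep_rate p x * \<sigma>) * Gs p (\<lambda>w. U p \<sigma> w) x))"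
proof -
  let ?r = "sep_rate p x"
  let ?f = "\<lambda>k \<sigma>. exp (?r * \<sigma>) * Gs p (\<lambda>w. F p k \<sigma> w) x"
  let ?g = "\<lambda>\<sigma>. exp (?r * \<sigma>) * Gs p (\<lambda>w. U p \<sigma> w) x"
  have intf: "?f k integrable_on {0..t}" for k
    by (intro integrable_continuous_real continuous_intros Gs_cont F_cont)
  have mc: "?g integrable_on {0..t} \<and> ((\<lambda>k. integral {0..t} (?f k)) \<longlonglongrightarrow> integral {0..t} ?g)"
  proof (rule monotone_convergence_increasing)
    show "?f k integrable_on {0..t}" for k by (rule intf)
    show "?f k \<sigma> \<le> ?f (Suc k) \<sigma>" if "\<sigma> \<in> {0..t}" for k \<sigma>
      using that by (intro mult_left_mono Gs_mono[OF p0 p1] F_mono[OF p0 p1]) auto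
    show "(\<lambda>k. ?f k \<sigma>) \<longlonglongrightarrow> ?g \<sigma>" if "\<sigma> \<in> {0..t}" for \<sigma>
      unfolding Gs_def using that by (intro tendsto_intros F_tendsto_U) auto
    have "\<bar>integral {0..t} (?f k)\<bar> \<le> exp (?r * t) - 1" for k
    proof -
      have "0 \<le> integral {0..t} (?f k)"
        by (intro integral_nonneg intf mult_nonneg_nonneg Gs_nonneg[OF p0 p1] F_nonneg[OF p0 p1]) auto
      moreover have "integral {0..t} (?f k) \<le> integral {0..t} (\<lambda>\<sigma>. exp (?r * \<sigma>) * ?r)"
        by (intro integral_le intf integrable_continuous_real continuous_intros mult_left_mono
              Gs_le_rate[OF p0 p1] F_le1[OF p0 p1]) auto
      moreover have "integral {0..t} (\<lambda>\<sigma>. exp (?r * \<sigma>) * ?r) = exp (?r * t) - 1"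
        by (rule int_exp[OF t])
      ultimately show ?thesis by simp
    qed
    then show "bounded (range (\<lambda>k. integral {0..t} (?f k)))"
      unfolding bounded_real by blast
  qed
  then show "?g integrable_on {0..t}" by blast
  have "(\<lambda>k. F p (Suc k) t x) \<longlonglongrightarrow> U p t x"
    using F_tendsto_U[OF t] by (rule LIMSEQ_Suc)
  moreover have "(\<lambda>k. F p (Suc k) t x) \<longlonglongrightarrow> exp (- ?r * t) * ((if x = Oconf then 1 else 0) + integral {0..t} ?g)"
    unfolding F_rep using mc by (intro tendsto_intros) auto
  ultimately show "U p t x = exp (- ?r * t) * ((if x = Oconf then 1 else 0) + integral {0..t} ?g)"
    by (rule LIMSEQ_unique)
qed

lemma U_at0: "U p 0 x = (if x = Oconf then 1 else 0)"
  using U_rep(2)[of 0 x] by simp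

lemma U_cont: "continuous_on {0..T} (\<lambda>t. U p t x)"
proof (cases "0 \<le> T")
  case True
  let ?r = "sep_rate p x"
  let ?g = "\<lambda>\<sigma>. exp (?r * \<sigma>) * Gs p (\<lambda>w. U p \<sigma> w) x"
  have "continuous_on {0..T} (\<lambda>t. exp (- ?r * t) * ((if x = Oconf then 1 else 0) + integral {0..t} ?g))"
    by (intro continuous_intros indefinite_integral_continuous_1 U_rep(1) True)
  then show ?thesis
    by (rule continuous_on_eq) (use U_rep(2) in auto)
qed auto

lemma U_deriv: "0 < t \<Longrightarrow> ((\<lambda>t. U p t x) has_real_derivative
   (- sep_rate p x * U p t x + Gs p (\<lambda>w. U p t w) x)) (at t)"
proof -
  assume t: "0 < t"
  let ?r = "sep_rate p x"
  let ?\<phi> = "\<lambda>t. exp (- ?r * t) * ((if x = Oconf then 1 else 0) + integral {0..t} (\<lambda>\<sigma>. exp (?r * \<sigma>) * Gs p (\<lambda>w. U p \<sigma> w) x))"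
  have "(?\<phi> has_real_derivative (- ?r * ?\<phi> t + Gs p (\<lambda>w. U p t w) x)) (at t)"
    by (rule lemA(2)[where g="\<lambda>\<sigma>. Gs p (\<lambda>w. U p \<sigma> w) x"]) (use t in \<open>auto intro: Gs_cont U_cont\<close>)
  then have "(?\<phi> has_real_derivative (- ?r * U p t x + Gs p (\<lambda>w. U p t w) x)) (at t)"
    using U_rep(2)[of t x] t by simp
  then show ?thesis
    by (rule has_field_derivative_transform_within_open[where S="{0<..}"])
       (use t U_rep(2) in auto)
qed

end




lemma gronwall_family:
  fixes D :: "'a \<Rightarrow> real \<Rightarrow> real" and S :: "'a set"
  assumes fin: "finite S"
    and cont: "\<And>z T. z \<in> S \<Longrightarrow> continuous_on {0..T} (D z)"
    and init: "\<And>z. z \<in> S \<Longrightarrow> 0 \<le> D z 0"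
    and deriv: "\<And>z t. z \<in> S \<Longrightarrow> 0 < t \<Longrightarrow> \<exists>d. (D z has_real_derivative d) (at t) \<and>
                   - c z * D z t + (\<Sum>k\<in>K z. \<rho> z k * D (nb z k) t) \<le> d"
    and Kfin: "\<And>z. z \<in> S \<Longrightarrow> finite (K z)"
    and Knb: "\<And>z k. z \<in> S \<Longrightarrow> k \<in> K z \<Longrightarrow> nb z k \<in> S"
    and Krho: "\<And>z k. z \<in> S \<Longrightarrow> k \<in> K z \<Longrightarrow> 0 \<le> \<rho> z k"
    and c: "\<And>z. z \<in> S \<Longrightarrow> 0 \<le> c z"
    and zS: "z \<in> S" and t0: "0 \<le> t"
  shows "0 \<le> D z t"
proof -
  define L where "L = 1 + (\<Sum>z\<in>S. \<Sum>k\<in>K z. \<rho> z k)"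
  have rhoL: "(\<Sum>k\<in>K z. \<rho> z k) \<le> L - 1" if "z \<in> S" for z
    unfolding L_def using that
    by (simp, intro member_le_sum[OF that _ fin] sum_nonneg) (auto intro: Krho)
  have pos: "0 < D z t + \<epsilon> * exp (L * t)" if eps: "0 < \<epsilon>" and zS: "z \<in> S" and t: "0 \<le> t" for \<epsilon> z t
  proof (rule ccontr)
    define \<psi> where "\<psi> = (\<lambda>z t. D z t + \<epsilon> * exp (L * t))"
    have \<psi>c: "continuous_on {0..T} (\<psi> w)" if "w \<in> S" for w T
      unfolding \<psi>_def by (intro continuous_intros cont that)
    assume "\<not> 0 < D z t + \<epsilon> * exp (L * t)"
    then have zt: "\<psi> z t \<le> 0" by (simp add: \<psi>_def)
    define T0 where "T0 = (\<Union>w\<in>S. {0..t} \<inter> \<psi> w -` {..0})"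
    have clo: "closed T0" unfolding T0_def
      by (intro closed_UN fin ballI continuous_closed_preimage \<psi>c) auto
    have "t \<in> T0" using zt zS t unfolding T0_def by (auto intro!: bexI[OF _ zS])
    then have ne: "T0 \<noteq> {}" by auto
    have bdd: "bdd_below T0" unfolding T0_def by (rule bdd_belowI[of _ 0]) auto
    define \<tau> where "\<tau> = Inf T0"
    have \<tau>T0: "\<tau> \<in> T0" unfolding \<tau>_def by (rule closed_contains_Inf[OF ne bdd clo])
    have \<tau>le: "\<tau> \<le> s" if "s \<in> T0" for s unfolding \<tau>_def by (rule cInf_lower[OF that bdd])
    from \<tau>T0 obtain z where zS: "z \<in> S" and \<tau>0: "0 \<le> \<tau>" and \<tau>t: "\<tau> \<le> t" and z\<tau>: "\<psi> z \<tau> \<le> 0"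
      unfolding T0_def by auto
    have \<psi>0: "0 < \<psi> w 0" if "w \<in> S" for w
      using init[OF that] eps by (simp add: \<psi>_def)
    have \<tau>pos: "0 < \<tau>" using \<psi>0[OF zS] z\<tau> \<tau>0 by (cases "\<tau> = 0") auto
    have others: "0 \<le> \<psi> w \<tau>" if wS: "w \<in> S" for w
    proof (rule ccontr)
      assume "\<not> 0 \<le> \<psi> w \<tau>"
      then obtain s where s: "0 \<le> s" "s \<le> \<tau>" "\<psi> w s = 0"
        using IVT2'[of "\<psi> w" \<tau> 0 0] \<psi>0[OF wS] \<tau>0 \<psi>c[OF wS] by force
      then have "s \<noteq> \<tau>" using \<open>\<not> 0 \<le> \<psi> w \<tau>\<close> by auto
      moreover have "s \<in> T0" unfolding T0_def using s wS \<tau>t by (auto intro!: bexI[OF _ wS])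
      ultimately show False using \<tau>le s by force
    qed
    obtain d where d: "(D z has_real_derivative d) (at \<tau>)"
      and dge: "- c z * D z \<tau> + (\<Sum>k\<in>K z. \<rho> z k * D (nb z k) \<tau>) \<le> d"
      using deriv[OF zS \<tau>pos] by blast
    define E where "E = exp (L * \<tau>)"
    have Epos: "0 < E" unfolding E_def by simp
    have "\<rho> z k * D (nb z k) \<tau> \<ge> \<rho> z k * (- \<epsilon> * E)" if "k \<in> K z" for k
      using others[OF Knb[OF zS that]] Krho[OF zS that] unfolding \<psi>_def E_def
      by (intro mult_left_mono) auto
    then have "(\<Sum>k\<in>K z. \<rho> z k * D (nb z k) \<tau>) \<ge> (\<Sum>k\<in>K z. \<rho> z k * (- \<epsilon> * E))"
      by (rule sum_mono)
    also have "(\<Sum>k\<in>K z. \<rho> z k * (- \<epsilon> * E)) = (\<Sum>k\<in>K z. \<rho> z k) * (- \<epsilon> * E)"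
      by (rule sum_distrib_right[symmetric])
    finally have A1: "(\<Sum>k\<in>K z. \<rho> z k * D (nb z k) \<tau>) \<ge> (\<Sum>k\<in>K z. \<rho> z k) * (- \<epsilon> * E)" .
    have A2: "(\<Sum>k\<in>K z. \<rho> z k) * (\<epsilon> * E) \<le> (L - 1) * (\<epsilon> * E)"
      using rhoL[OF zS] eps Epos by (intro mult_right_mono) auto
    have eE: "0 < \<epsilon> * E" using eps Epos by simp
    have Dn: "D z \<tau> \<le> 0" using z\<tau> eE unfolding \<psi>_def E_def by linarith
    have A3: "- c z * D z \<tau> \<ge> 0"
      using c[OF zS] Dn by (simp add: mult_nonneg_nonpos)
    have dlow: "d \<ge> - (L - 1) * (\<epsilon> * E)" using dge A1 A2 A3 by linarith
    have d\<psi>: "(\<psi> z has_real_derivative (d + \<epsilon> * (L * E))) (at \<tau>)"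
      unfolding \<psi>_def E_def by (auto intro!: derivative_eq_intros d)
    have "0 < d + \<epsilon> * (L * E)" using dlow eE by (simp add: algebra_simps)
    from DERIV_pos_inc_left[OF d\<psi> this] obtain \<delta> where \<delta>: "\<delta> > 0"
      and inc: "\<And>h. h > 0 \<Longrightarrow> h < \<delta> \<Longrightarrow> \<psi> z (\<tau> - h) < \<psi> z \<tau>" by blast
    define h where "h = min (\<delta>/2) (\<tau>/2)"
    have h: "h > 0" "h < \<delta>" "h \<le> \<tau>" using \<delta> \<tau>pos by (auto simp: h_def)
    have "\<psi> z (\<tau> - h) < 0" using inc[OF h(1,2)] z\<tau> by simp
    then have "\<tau> - h \<in> T0" unfolding T0_def using zS h \<tau>t by (auto intro!: bexI[OF _ zS])
    then show False using \<tau>le h by force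
  qed
  show ?thesis
  proof (rule ccontr)
    assume neg: "\<not> 0 \<le> D z t"
    define \<epsilon> where "\<epsilon> = - D z t / (2 * exp (L * t))"
    have "0 < \<epsilon>" using neg by (simp add: \<epsilon>_def divide_neg_pos)
    from pos[OF this zS t0] have "0 < D z t - D z t / 2" by (simp add: \<epsilon>_def)
    then show False using neg by simp
  qed
qed




definition Nc :: "config \<Rightarrow> int \<Rightarrow> nat" where
  "Nc x i = card {j\<in>x. j > i}"

lemma preceq_Nc: "sep_preceq z x \<longleftrightarrow> (\<forall>i. Nc z i \<le> Nc x i)"
  unfolding sep_preceq_def Nc_def by simp

lemma U0D: assumes "x \<in> U0"
  shows "finite {i \<in> x. i \<ge> 0}" "finite {i. i < 0 \<and> i \<notin> x}"
        "card {i \<in> x. i \<ge> 0} = card {i. i < 0 \<and> i \<notin> x}"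
  using assms unfolding U0_def by auto

lemma U0_fin_gt: assumes "x \<in> U0" shows "finite {j\<in>x. j > i}"
proof -
  have "{j\<in>x. j > i} \<subseteq> {i<..<0} \<union> {j \<in> x. j \<ge> 0}" by auto
  then show ?thesis using U0D(1)[OF assms] by (meson finite_Un finite_greaterThanLessThan_int finite_subset)
qed

lemma Nc_step: assumes "x \<in> U0" shows "Nc x (i - 1) = Nc x i + (if i \<in> x then 1 else 0)"
proof -
  have e: "\<And>j. (j > i - 1) = (j = i \<or> j > i)" by auto
  have "{j\<in>x. j > i - 1} = (if i \<in> x then insert i {j\<in>x. j > i} else {j\<in>x. j > i})" unfolding e by auto
  then show ?thesis unfolding Nc_def using U0_fin_gt[OF assms, of i] by auto
qed

lemma Nc_step': assumes "x \<in> U0" shows "Nc x i = Nc x (i + 1) + (if i + 1 \<in> x then 1 else 0)"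
  using Nc_step[OF assms, of "i+1"] by simp

lemma move_U0:
  assumes x: "x \<in> U0" and a: "a \<in> x" and b: "b \<notin> x"
  shows "insert b (x - {a}) \<in> U0"
proof -
  let ?P = "{i \<in> x. i \<ge> 0}" and ?H = "{i. i < 0 \<and> i \<notin> x}"
  let ?x = "insert b (x - {a})"
  let ?P' = "{i \<in> ?x. i \<ge> 0}" and ?H' = "{i. i < 0 \<and> i \<notin> ?x}"
  have fP: "finite ?P" and fH: "finite ?H" and cPH: "card ?P = card ?H" using U0D[OF x] by auto
  have ab: "a \<noteq> b" using a b by auto
  consider "a < 0" "b < 0" | "a < 0" "b \<ge> 0" | "a \<ge> 0" "b < 0" | "a \<ge> 0" "b \<ge> 0" by linarith
  then have "finite ?P' \<and> finite ?H' \<and> card ?P' = card ?H'"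
  proof cases
    case 1
    have "?P' = ?P" using 1 by auto
    moreover have "?H' = insert a (?H - {b})" using 1 a b ab by auto
    moreover have "b \<in> ?H" "a \<notin> ?H - {b}" using 1 a b by auto
    moreover have "card ?H > 0" using \<open>b \<in> ?H\<close> fH by (auto simp: card_gt_0_iff)
    ultimately show ?thesis using fP fH cPH by (simp add: card_Diff_singleton)
  next
    case 2
    have "?P' = insert b ?P" using 2 a b ab by auto
    moreover have "?H' = insert a ?H" using 2 a b ab by auto
    moreover have "b \<notin> ?P" "a \<notin> ?H" using 2 a b by auto
    ultimately show ?thesis using fP fH cPH by simp
  next
    case 3
    have "?P' = ?P - {a}" using 3 a b ab by auto
    moreover have "?H' = ?H - {b}" using 3 a b ab by auto
    moreover have "a \<in> ?P" "b \<in> ?H" using 3 a b by auto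
    ultimately show ?thesis using fP fH cPH by (simp add: card_Diff_singleton)
  next
    case 4
    have "?P' = insert b (?P - {a})" using 4 a b ab by auto
    moreover have "?H' = ?H" using 4 a b ab by auto
    moreover have "a \<in> ?P" "b \<notin> ?P - {a}" using 4 a b by auto
    moreover have "card ?P > 0" using \<open>a \<in> ?P\<close> fP by (auto simp: card_gt_0_iff)
    ultimately show ?thesis using fP fH cPH by (simp add: card_Diff_singleton)
  qed
  then show ?thesis unfolding U0_def by blast
qed

lemma moveR_U0: "x \<in> U0 \<Longrightarrow> i \<in> sep_R x \<Longrightarrow> sep_move x i (i+1) \<in> U0"
  unfolding sep_R_def sep_move_def by (auto intro: move_U0)

lemma moveL_U0: "x \<in> U0 \<Longrightarrow> i \<in> sep_L x \<Longrightarrow> sep_move x i (i-1) \<in> U0"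
  unfolding sep_L_def sep_move_def by (auto intro: move_U0)

lemma fin_R: assumes "x \<in> U0" shows "finite (sep_R x)"
proof -
  have "sep_R x \<subseteq> {i \<in> x. i \<ge> 0} \<union> (\<lambda>h. h - 1) ` {i. i < 0 \<and> i \<notin> x} \<union> {-1}"
    unfolding sep_R_def by (force simp: image_iff)
  then show ?thesis using U0D[OF assms] by (meson finite_Un finite_imageI finite.intros finite_subset)
qed

lemma fin_L: assumes "x \<in> U0" shows "finite (sep_L x)"
proof -
  have "sep_L x \<subseteq> {i \<in> x. i \<ge> 0} \<union> (\<lambda>h. h + 1) ` {i. i < 0 \<and> i \<notin> x}"
    unfolding sep_L_def by (force simp: image_iff)
  then show ?thesis using U0D[OF assms] by (meson finite_Un finite_imageI finite_subset)
qed

lemma Nc_moveR: assumes x: "x \<in> U0" and i: "i \<in> sep_R x"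
  shows "Nc (sep_move x i (i+1)) k = Nc x k + (if k = i then 1 else 0)"
proof -
  have ix: "i \<in> x" "i + 1 \<notin> x" using i unfolding sep_R_def by auto
  let ?y = "sep_move x i (i+1)"
  have f: "finite {j\<in>x. j > k}" by (rule U0_fin_gt[OF x])
  consider "k = i" | "k < i" | "k > i" by linarith
  then show ?thesis
  proof cases
    case 1
    have "{j\<in>?y. j > k} = insert (i+1) {j\<in>x. j > k}" using 1 ix unfolding sep_move_def by auto
    then show ?thesis unfolding Nc_def using f 1 ix by simp
  next
    case 2
    have "{j\<in>?y. j > k} = insert (i+1) ({j\<in>x. j > k} - {i})" using 2 ix unfolding sep_move_def by auto
    moreover have "card {j\<in>x. j > k} > 0" using f 2 ix by (auto simp: card_gt_0_iff)
    ultimately show ?thesis unfolding Nc_def using f 2 ix by (simp add: card_Diff_singleton)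
  next
    case 3
    have "{j\<in>?y. j > k} = {j\<in>x. j > k}" using 3 ix unfolding sep_move_def by auto
    then show ?thesis unfolding Nc_def using 3 by simp
  qed
qed

lemma Nc_moveL: assumes x: "x \<in> U0" and i: "i \<in> sep_L x"
  shows "Nc x k = Nc (sep_move x i (i-1)) k + (if k = i - 1 then 1 else 0)"
proof -
  have ix: "i \<in> x" "i - 1 \<notin> x" using i unfolding sep_L_def by auto
  let ?y = "sep_move x i (i-1)"
  have f: "finite {j\<in>x. j > k}" by (rule U0_fin_gt[OF x])
  consider "k = i - 1" | "k < i - 1" | "k > i - 1" by linarith
  then show ?thesis
  proof cases
    case 1
    have "{j\<in>x. j > k} = insert i {j\<in>?y. j > k}" "i \<notin> {j\<in>?y. j > k}" using 1 ix unfolding sep_move_def by auto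
    moreover have "finite {j\<in>?y. j > k}"
      by (rule finite_subset[OF _ f]) (use 1 in \<open>auto simp: sep_move_def\<close>)
    ultimately show ?thesis unfolding Nc_def using 1 by simp
  next
    case 2
    have "{j\<in>?y. j > k} = insert (i-1) ({j\<in>x. j > k} - {i})" using 2 ix unfolding sep_move_def by auto
    moreover have "card {j\<in>x. j > k} > 0" using f 2 ix by (auto simp: card_gt_0_iff)
    ultimately show ?thesis unfolding Nc_def using f 2 ix by (simp add: card_Diff_singleton)
  next
    case 3
    have "{j\<in>?y. j > k} = {j\<in>x. j > k}" using 3 ix unfolding sep_move_def by auto
    then show ?thesis unfolding Nc_def using 3 by simp
  qed
qed


context fixes x z :: config assumes x: "x \<in> U0" and z: "z \<in> U0" and zx: "sep_preceq z x" begin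

lemma zxN: "Nc z k \<le> Nc x k" using zx preceq_Nc by blast

lemma cR_both: "i \<in> sep_R x \<Longrightarrow> i \<in> sep_R z \<Longrightarrow> sep_preceq (sep_move z i (i+1)) (sep_move x i (i+1))"
  unfolding preceq_Nc using Nc_moveR[OF x] Nc_moveR[OF z] zxN by simp

lemma cR_xonly: "i \<in> sep_R x \<Longrightarrow> sep_preceq z (sep_move x i (i+1))"
  unfolding preceq_Nc using Nc_moveR[OF x] zxN by (simp add: trans_le_add1)

lemma cR_zonly: assumes iz: "i \<in> sep_R z" and ix: "i \<notin> sep_R x"
  shows "sep_preceq (sep_move z i (i+1)) x"
proof -
  have "Nc z i < Nc x i"
  proof (rule ccontr)
    assume "\<not> Nc z i < Nc x i"
    then have eq: "Nc z i = Nc x i" using zxN[of i] by simp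
    have a: "Nc z (i-1) = Nc z i + (if i \<in> z then 1 else 0)" "Nc x (i-1) = Nc x i + (if i \<in> x then 1 else 0)"
      using Nc_step[OF z, of i] Nc_step[OF x, of i] by simp_all
    have b: "Nc z i = Nc z (i+1) + (if i+1 \<in> z then 1 else 0)" "Nc x i = Nc x (i+1) + (if i+1 \<in> x then 1 else 0)"
      using Nc_step'[OF z, of i] Nc_step'[OF x, of i] by simp_all
    have z1: "i \<in> z" and z2: "i+1 \<notin> z" using iz unfolding sep_R_def by auto
    have "i \<in> x"
    proof (rule ccontr)
      assume "i \<notin> x"
      then have "Nc x (i-1) = Nc x i" using a(2) by simp
      moreover have "Nc z (i-1) = Nc z i + 1" using a(1) z1 by simp
      ultimately show False using eq zxN[of "i-1"] by linarith
    qed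
    moreover have "i+1 \<notin> x"
    proof
      assume "i+1 \<in> x"
      then have "Nc x i = Nc x (i+1) + 1" using b(2) by simp
      moreover have "Nc z i = Nc z (i+1)" using b(1) z2 by simp
      ultimately show False using eq zxN[of "i+1"] by linarith
    qed
    ultimately show False using ix unfolding sep_R_def by auto
  qed
  then show ?thesis unfolding preceq_Nc using Nc_moveR[OF z iz] zxN by auto
qed

lemma cL_both: "i \<in> sep_L x \<Longrightarrow> i \<in> sep_L z \<Longrightarrow> sep_preceq (sep_move z i (i-1)) (sep_move x i (i-1))"
  unfolding preceq_Nc
proof
  fix k assume "i \<in> sep_L x" "i \<in> sep_L z"
  from Nc_moveL[OF x this(1), of k] Nc_moveL[OF z this(2), of k] zxN[of k]
  show "Nc (sep_move z i (i - 1)) k \<le> Nc (sep_move x i (i - 1)) k" by (auto split: if_splits)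
qed

lemma cL_zonly: "i \<in> sep_L z \<Longrightarrow> sep_preceq (sep_move z i (i-1)) x"
  unfolding preceq_Nc
proof
  fix k assume "i \<in> sep_L z"
  from Nc_moveL[OF z this, of k] zxN[of k]
  show "Nc (sep_move z i (i - 1)) k \<le> Nc x k" by (auto split: if_splits)
qed

lemma cL_xonly: assumes ix: "i \<in> sep_L x" and iz: "i \<notin> sep_L z"
  shows "sep_preceq z (sep_move x i (i-1))"
proof -
  have "Nc z (i-1) < Nc x (i-1)"
  proof (rule ccontr)
    assume "\<not> Nc z (i-1) < Nc x (i-1)"
    then have eq: "Nc z (i-1) = Nc x (i-1)" using zxN[of "i-1"] by simp
    have a: "Nc z (i-1) = Nc z i + (if i \<in> z then 1 else 0)" "Nc x (i-1) = Nc x i + (if i \<in> x then 1 else 0)"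
      using Nc_step[OF z, of i] Nc_step[OF x, of i] by simp_all
    have b: "Nc z (i-1-1) = Nc z (i-1) + (if i-1 \<in> z then 1 else 0)" "Nc x (i-1-1) = Nc x (i-1) + (if i-1 \<in> x then 1 else 0)"
      using Nc_step[OF z, of "i-1"] Nc_step[OF x, of "i-1"] by simp_all
    have x1: "i \<in> x" and x2: "i-1 \<notin> x" using ix unfolding sep_L_def by auto
    have "i \<in> z"
    proof (rule ccontr)
      assume "i \<notin> z"
      then have "Nc z (i-1) = Nc z i" using a(1) by simp
      moreover have "Nc x (i-1) = Nc x i + 1" using a(2) x1 by simp
      ultimately show False using eq zxN[of "i"] by linarith
    qed
    moreover have "i-1 \<notin> z"
    proof
      assume "i-1 \<in> z"
      then have "Nc z (i-1-1) = Nc z (i-1) + 1" using b(1) by simp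
      moreover have "Nc x (i-1-1) = Nc x (i-1)" using b(2) x2 by simp
      ultimately show False using eq zxN[of "i-1-1"] by linarith
    qed
    ultimately show False using iz unfolding sep_L_def by auto
  qed
  then show ?thesis unfolding preceq_Nc
  proof (intro allI)
    fix k assume lt: "Nc z (i-1) < Nc x (i-1)"
    show "Nc z k \<le> Nc (sep_move x i (i - 1)) k"
      using Nc_moveL[OF x ix, of k] zxN[of k] lt by (cases "k = i - 1") auto
  qed
qed

end

lemma O_U0: "Oconf \<in> U0"
proof -
  have e: "{i. i < 0 \<and> (0::int) \<le> i} = {}" by auto
  show ?thesis unfolding U0_def Oconf_def by (auto simp: e)
qed

lemma below_O: assumes z: "z \<in> U0" and zO: "sep_preceq z Oconf" shows "z = Oconf"
proof -
  have "Nc z (-1) \<le> Nc Oconf (-1)" using zO preceq_Nc by blast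
  moreover have "Nc Oconf (-1) = 0"
  proof -
    have e: "{j::int. j < 0 \<and> -1 < j} = {}" by auto
    show ?thesis unfolding Nc_def Oconf_def by (simp add: e)
  qed
  ultimately have "{j\<in>z. j > -1} = {}" unfolding Nc_def using U0_fin_gt[OF z, of "-1"] by simp
  then have P: "{i \<in> z. i \<ge> 0} = {}" by auto
  have "card {i \<in> z. i \<ge> 0} = 0" by (simp only: P card.empty)
  then have "card {i. i < 0 \<and> i \<notin> z} = 0" using U0D(3)[OF z] by simp
  then have "{i. i < 0 \<and> i \<notin> z} = {}" using U0D(2)[OF z] by simp
  with P show ?thesis unfolding Oconf_def by auto
qed


lemma Nc_neg: assumes w: "w \<in> U0" and a: "a < 0"
  shows "Nc w a = card {a<..<0::int} + card {i. i < 0 \<and> i \<notin> w \<and> i \<le> a}"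
proof -
  let ?P = "{i \<in> w. i \<ge> 0}" and ?H = "{i. i < 0 \<and> i \<notin> w}"
  let ?B = "{i. i < 0 \<and> i \<notin> w \<and> a < i}" and ?C = "{i. i < 0 \<and> i \<notin> w \<and> i \<le> a}"
  have fP: "finite ?P" and fH: "finite ?H" and cPH: "card ?P = card ?H" using U0D[OF w] by auto
  have fB: "finite ?B" by (rule finite_subset[OF _ fH]) auto
  have fC: "finite ?C" by (rule finite_subset[OF _ fH]) auto
  have "?H = ?B \<union> ?C" by auto
  moreover have "?B \<inter> ?C = {}" by auto
  ultimately have cH: "card ?H = card ?B + card ?C" using fB fC by (simp add: card_Un_disjoint)
  have e: "{j\<in>w. j > a} = ({a<..<0} - ?B) \<union> ?P" using a by auto
  have d: "({a<..<0} - ?B) \<inter> ?P = {}" by auto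
  have Bs: "?B \<subseteq> {a<..<0}" by auto
  have "Nc w a = card ({a<..<0} - ?B) + card ?P"
    unfolding Nc_def e using d fP by (simp add: card_Un_disjoint)
  also have "card ({a<..<0} - ?B) = card {a<..<0} - card ?B"
    by (rule card_Diff_subset[OF fB Bs])
  finally show ?thesis using cH cPH card_mono[OF _ Bs] by simp
qed

lemma fin_below: assumes x: "x \<in> U0" shows "finite {z \<in> U0. sep_preceq z x}"
proof -
  let ?P = "{i \<in> x. i \<ge> 0}" and ?H = "{i. i < 0 \<and> i \<notin> x}"
  have fP: "finite ?P" and fH: "finite ?H" using U0D[OF x] by auto
  define b where "b = Max (insert 0 ?P)"
  define a where "a = Min (insert (-1) ?H) - 1"
  have xb: "j \<le> b" if "j \<in> x" for j
  proof (cases "j \<ge> 0")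
    case True then show ?thesis unfolding b_def using that fP by (intro Max_ge) auto
  next
    case False
    have "0 \<le> b" unfolding b_def using fP by (intro Max_ge) auto
    then show ?thesis using False by simp
  qed
  have a0: "a < 0" unfolding a_def using fH by (smt (verit) Min_le finite_insert insertI1)
  have Ha: "h > a" if "h \<in> ?H" for h unfolding a_def using that fH
    by (smt (verit) Min_le finite_insert insertCI)
  define S where "S = {z \<in> U0. sep_preceq z x}"
  have zb: "\<forall>j\<in>z. j \<le> b" if "z \<in> S" for z
  proof -
    have zU: "z \<in> U0" and "sep_preceq z x" using that unfolding S_def by auto
    then have "Nc z b \<le> Nc x b" using preceq_Nc by blast
    moreover have "{j\<in>x. j > b} = {}" using xb by force
    ultimately have "{j\<in>z. j > b} = {}" unfolding Nc_def using U0_fin_gt[OF zU, of b] by simp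
    then show ?thesis by (auto simp: not_less[symmetric])
  qed
  have za: "\<forall>j. j \<le> a \<longrightarrow> j \<in> z" if "z \<in> S" for z
  proof -
    have zU: "z \<in> U0" and "sep_preceq z x" using that unfolding S_def by auto
    then have "Nc z a \<le> Nc x a" using preceq_Nc by blast
    moreover have "{i. i < 0 \<and> i \<notin> x \<and> i \<le> a} = {}" using Ha by force
    ultimately have c0: "card {i. i < 0 \<and> i \<notin> z \<and> i \<le> a} = 0"
      using Nc_neg[OF zU a0] Nc_neg[OF x a0] by simp
    have "finite {i. i < 0 \<and> i \<notin> z \<and> i \<le> a}"
      by (rule finite_subset[OF _ U0D(2)[OF zU]]) auto
    then have "{i. i < 0 \<and> i \<notin> z \<and> i \<le> a} = {}" using c0 by simp
    then have "\<forall>j. j \<notin> {i. i < 0 \<and> i \<notin> z \<and> i \<le> a}" by simp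
    then show ?thesis using a0 by (metis (mono_tags, lifting) mem_Collect_eq order_le_less_trans)
  qed
  have rep: "z = (z \<inter> {a<..b}) \<union> {..a}" if "z \<in> S" for z
    using zb[OF that] za[OF that] by auto
  have "inj_on (\<lambda>z. z \<inter> {a<..b}) S"
    by (rule inj_onI) (metis rep)
  moreover have "(\<lambda>z. z \<inter> {a<..b}) ` S \<subseteq> Pow {a<..b}" by auto
  ultimately have "finite S"
    by (meson finite_Pow_iff finite_greaterThanAtMost_int finite_imageD finite_subset)
  then show ?thesis unfolding S_def .
qed




lemma K_sum:
  fixes f g :: "int \<Rightarrow> real"
  assumes "finite A" "finite B"
  shows "(\<Sum>k\<in>Inl ` A \<union> Inr ` B. (case k of Inl i \<Rightarrow> f i | Inr i \<Rightarrow> g i)) = (\<Sum>i\<in>A. f i) + (\<Sum>i\<in>B. g i)"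
proof -
  have "(\<Sum>k\<in>Inl ` A \<union> Inr ` B. (case k of Inl i \<Rightarrow> f i | Inr i \<Rightarrow> g i)) =
        (\<Sum>k\<in>Inl ` A. (case k of Inl i \<Rightarrow> f i | Inr i \<Rightarrow> g i)) + (\<Sum>k\<in>Inr ` B. (case k of Inl i \<Rightarrow> f i | Inr i \<Rightarrow> g i))"
    by (rule sum.union_disjoint) (use assms in auto)
  also have "\<dots> = (\<Sum>i\<in>A. f i) + (\<Sum>i\<in>B. g i)"
    by (simp add: sum.reindex)
  finally show ?thesis .
qed

context fixes p :: real assumes p0: "0 < p" and p1: "p < 1" begin

lemma main_step:
  assumes IH: "\<And>t x z. 0 \<le> t \<Longrightarrow> x \<in> U0 \<Longrightarrow> z \<in> U0 \<Longrightarrow> sep_preceq z x \<Longrightarrow> F p N t x \<le> U p t z"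
    and x: "x \<in> U0" and z0: "z0 \<in> U0" and zx0: "sep_preceq z0 x" and t0: "0 \<le> t0"
  shows "F p (Suc N) t0 x \<le> U p t0 z0"
proof -
  define S where "S = {z \<in> U0. sep_preceq z x}"
  define D where "D = (\<lambda>z t. U p t z - F p (Suc N) t x)"
  define K where "K = (\<lambda>z. Inl ` (sep_R z - sep_R x) \<union> Inr ` (sep_L z - sep_L x))"
  define nb where "nb = (\<lambda>z k. case k of Inl i \<Rightarrow> sep_move z i (i+1) | Inr i \<Rightarrow> sep_move z i (i-1))"
  define \<rho> where "\<rho> = (\<lambda>(z::config) (k::int+int). case k of Inl i \<Rightarrow> p | Inr i \<Rightarrow> 1 - p)"
  define c where "c = (\<lambda>z. sep_rate p z + p * real (card (sep_R x - sep_R z)) + (1-p) * real (card (sep_L x - sep_L z)))"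
  have "0 \<le> D z0 t0"
  proof (rule gronwall_family[where D=D and z=z0 and t=t0 and S=S and K=K and nb=nb and \<rho>=\<rho> and c=c])
    show "finite S" unfolding S_def by (rule fin_below[OF x])
    show "continuous_on {0..T} (D z)" if "z \<in> S" for z T
      unfolding D_def by (intro continuous_on_diff U_cont[OF p0 p1] F_cont)
    show "0 \<le> D z 0" if "z \<in> S" for z
    proof -
      have "x = Oconf \<Longrightarrow> z = Oconf" using that below_O unfolding S_def by auto
      then show ?thesis unfolding D_def U_at0[OF p0 p1] F_at0 by auto
    qed
    show "finite (K z)" if "z \<in> S" for z
      using that fin_R fin_L unfolding K_def S_def by auto
    show "nb z k \<in> S" if "z \<in> S" "k \<in> K z" for z k
      using that unfolding K_def S_def nb_def
      by (auto intro: moveR_U0 moveL_U0 cR_zonly[OF x] cL_zonly[OF x])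
    show "0 \<le> \<rho> z k" if "z \<in> S" "k \<in> K z" for z k
      using p0 p1 unfolding \<rho>_def by (auto split: sum.splits)
    show "0 \<le> c z" if "z \<in> S" for z
      using p0 p1 rate_nonneg[OF p0 p1, of z] unfolding c_def by auto
    show "z0 \<in> S" using z0 zx0 unfolding S_def by auto
    show "0 \<le> t0" by (rule t0)
    show "\<exists>d. (D z has_real_derivative d) (at t) \<and> - c z * D z t + (\<Sum>k\<in>K z. \<rho> z k * D (nb z k) t) \<le> d"
      if zS: "z \<in> S" and t: "0 < t" for z t
    proof -
      have z: "z \<in> U0" and zx: "sep_preceq z x" using zS unfolding S_def by auto
      let ?d = "(- sep_rate p z * U p t z + Gs p (\<lambda>w. U p t w) z) - (- sep_rate p x * F p (Suc N) t x + Gs p (\<lambda>w. F p N t w) x)"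
      have der: "(D z has_real_derivative ?d) (at t)"
        unfolding D_def by (intro DERIV_diff U_deriv[OF p0 p1] F_deriv t)
      define Rx where "Rx = sep_R x"
      define Rz where "Rz = sep_R z"
      define Lx where "Lx = sep_L x"
      define Lz where "Lz = sep_L z"
      have fin: "finite Rx" "finite Rz" "finite Lx" "finite Lz"
        unfolding Rx_def Rz_def Lx_def Lz_def using fin_R fin_L x z by auto
      define Uz where "Uz = U p t z"
      define W where "W = F p (Suc N) t x"
      define uR where "uR = (\<lambda>i. U p t (sep_move z i (i+1)))"
      define uL where "uL = (\<lambda>i. U p t (sep_move z i (i-1)))"
      define fR where "fR = (\<lambda>i. F p N t (sep_move x i (i+1)))"
      define fL where "fL = (\<lambda>i. F p N t (sep_move x i (i-1)))"
      define S1 where "S1 = (\<Sum>i\<in>Rz \<inter> Rx. p * uR i)"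
      define S3 where "S3 = (\<Sum>i\<in>Rz - Rx. p * uR i)"
      define L1 where "L1 = (\<Sum>i\<in>Lz \<inter> Lx. (1-p) * uL i)"
      define L3 where "L3 = (\<Sum>i\<in>Lz - Lx. (1-p) * uL i)"
      define T1 where "T1 = (\<Sum>i\<in>Rx \<inter> Rz. p * fR i)"
      define T2 where "T2 = (\<Sum>i\<in>Rx - Rz. p * fR i)"
      define M1 where "M1 = (\<Sum>i\<in>Lx \<inter> Lz. (1-p) * fL i)"
      define M2 where "M2 = (\<Sum>i\<in>Lx - Lz. (1-p) * fL i)"
      define a1 where "a1 = real (card (Rz \<inter> Rx))"
      define a2 where "a2 = real (card (Rx - Rz))"
      define a3 where "a3 = real (card (Rz - Rx))"
      define b1 where "b1 = real (card (Lz \<inter> Lx))"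
      define b2 where "b2 = real (card (Lx - Lz))"
      define b3 where "b3 = real (card (Lz - Lx))"
      have e1: "(\<Sum>i\<in>Rz. p * uR i) = S1 + S3" unfolding S1_def S3_def by (rule sum.Int_Diff[OF fin(2)])
      have e2: "(\<Sum>i\<in>Lz. (1-p) * uL i) = L1 + L3" unfolding L1_def L3_def by (rule sum.Int_Diff[OF fin(4)])
      have e3: "(\<Sum>i\<in>Rx. p * fR i) = T1 + T2" unfolding T1_def T2_def by (rule sum.Int_Diff[OF fin(1)])
      have e4: "(\<Sum>i\<in>Lx. (1-p) * fL i) = M1 + M2" unfolding M1_def M2_def by (rule sum.Int_Diff[OF fin(3)])
      have Gz: "Gs p (\<lambda>w. U p t w) z = S1 + S3 + L1 + L3"
        using e1 e2 unfolding Gs_def uR_def uL_def Rz_def Lz_def by simp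
      have Gx: "Gs p (\<lambda>w. F p N t w) x = T1 + T2 + M1 + M2"
        using e3 e4 unfolding Gs_def fR_def fL_def Rx_def Lx_def by simp
      have rz: "sep_rate p z = p * (a1 + a3) + (1-p) * (b1 + b3)"
        unfolding sep_rate_def a1_def a3_def b1_def b3_def Rz_def[symmetric] Lz_def[symmetric]
        using card_Int_Diff[OF fin(2), of Rx] card_Int_Diff[OF fin(4), of Lx] by simp
      have rx: "sep_rate p x = p * (a1 + a2) + (1-p) * (b1 + b2)"
        unfolding sep_rate_def a1_def a2_def b1_def b2_def Rx_def[symmetric] Lx_def[symmetric]
        using card_Int_Diff[OF fin(1), of Rz] card_Int_Diff[OF fin(3), of Lz]
        by (simp add: Int_commute)
      have cz: "c z = p * (a1 + a3) + (1-p) * (b1 + b3) + p * a2 + (1-p) * b2"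
        unfolding c_def rz a2_def b2_def Rx_def Rz_def Lx_def Lz_def by simp
      have Ks: "(\<Sum>k\<in>K z. \<rho> z k * D (nb z k) t) = (S3 - p * a3 * W) + (L3 - (1-p) * b3 * W)"
      proof -
        have "(\<Sum>k\<in>K z. \<rho> z k * D (nb z k) t) = (\<Sum>k\<in>K z. case k of Inl i \<Rightarrow> p * (uR i - W) | Inr i \<Rightarrow> (1-p) * (uL i - W))"
          by (rule sum.cong) (auto simp: \<rho>_def nb_def D_def uR_def uL_def W_def split: sum.splits)
        also have "\<dots> = (\<Sum>i\<in>Rz - Rx. p * (uR i - W)) + (\<Sum>i\<in>Lz - Lx. (1-p) * (uL i - W))"
          unfolding K_def Rz_def Rx_def Lz_def Lx_def
          by (rule K_sum) (use fin in \<open>auto simp: Rz_def Rx_def Lz_def Lx_def\<close>)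
        also have "\<dots> = (S3 - p * a3 * W) + (L3 - (1-p) * b3 * W)"
          unfolding S3_def L3_def a3_def b3_def
          by (simp add: right_diff_distrib sum_subtractf sum_distrib_left)
        finally show ?thesis .
      qed
      have m1: "T1 \<le> S1" unfolding T1_def S1_def fR_def uR_def
        by (subst Int_commute, intro sum_mono mult_left_mono IH cR_both[OF x z zx])
           (use t x z p0 moveR_U0 in \<open>auto simp: Rx_def Rz_def\<close>)
      have m2: "T2 \<le> p * a2 * Uz"
      proof -
        have "T2 \<le> (\<Sum>i\<in>Rx - Rz. p * Uz)" unfolding T2_def fR_def Uz_def
          by (intro sum_mono mult_left_mono IH cR_xonly[OF x z zx])
             (use t x z p0 moveR_U0 in \<open>auto simp: Rx_def Rz_def\<close>)
        then show ?thesis unfolding a2_def by (simp add: mult_ac)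
      qed
      have m3: "M1 \<le> L1" unfolding M1_def L1_def fL_def uL_def
        by (subst Int_commute, intro sum_mono mult_left_mono IH cL_both[OF x z zx])
           (use t x z p1 moveL_U0 in \<open>auto simp: Lx_def Lz_def\<close>)
      have m4: "M2 \<le> (1-p) * b2 * Uz"
      proof -
        have "M2 \<le> (\<Sum>i\<in>Lx - Lz. (1-p) * Uz)" unfolding M2_def fL_def Uz_def
          by (intro sum_mono mult_left_mono IH cL_xonly[OF x z zx])
             (use t x z p1 moveL_U0 in \<open>auto simp: Lx_def Lz_def\<close>)
        then show ?thesis unfolding b2_def by (simp add: mult_ac)
      qed
      have DzE: "D z t = Uz - W" unfolding D_def Uz_def W_def by simp
      have key: "?d - (- c z * D z t + (\<Sum>k\<in>K z. \<rho> z k * D (nb z k) t))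
                 = (S1 - T1) + (L1 - M1) + (p * a2 * Uz - T2) + ((1-p) * b2 * Uz - M2)"
        unfolding Gz Gx rz rx cz Ks DzE Uz_def[symmetric] W_def[symmetric]
        by (simp add: algebra_simps)
      have "- c z * D z t + (\<Sum>k\<in>K z. \<rho> z k * D (nb z k) t) \<le> ?d"
        using key m1 m2 m3 m4 by linarith
      with der show ?thesis by blast
    qed
  qed
  then show ?thesis unfolding D_def by simp
qed

lemma main_ind: "0 \<le> t \<Longrightarrow> x \<in> U0 \<Longrightarrow> z \<in> U0 \<Longrightarrow> sep_preceq z x \<Longrightarrow> F p N t x \<le> U p t z"
proof (induction N arbitrary: t x z)
  case 0
  then show ?case using U_nonneg[OF p0 p1] by (simp add: F_def)
next
  case (Suc N)
  show ?case by (rule main_step[OF Suc.IH Suc.prems(2,3,4,1)])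
qed

end

theorem lemma2p4:
  fixes p t :: real and x xt :: config
  assumes "0 < p" and "p < 1" and "0 \<le> t"
    and "x \<in> U0" and "xt \<in> U0" and "sep_preceq xt x"
  shows "sep_prob p x t Oconf \<le> sep_prob p xt t Oconf"
proof -
  have lim: "(\<lambda>N. F p N t x) \<longlonglongrightarrow> U p t x" by (rule F_tendsto_U[OF assms(1,2,3)])
  have "\<And>N. F p N t x \<le> U p t xt" using main_ind[OF assms(1,2,3,4,5,6)] by blast
  then have "U p t x \<le> U p t xt" by (intro LIMSEQ_le_const2[OF lim]) auto
  then show ?thesis unfolding U_def .
qed



end
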